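(* Let $N\ge1$, $K>0$, $r_i>0$, let $(\mu_{ij})$ be a nonnegative, symmetric, irreducible $N\times N$ matrix, and let $\Psi_1,\dots,\Psi_N:\mathbb{R}^N\to\mathbb{R}$ be locally Lipschitz, with $\Psi_i(0)=0$, monotone increasing for the componentwise order, and such that for each $i$ there exist positive $R_i,k_i,c_i$ with $c_i(\sum_jv_j)^{k_i}\le\Psi_i(v)$ for all $v\in[0,\infty)^N$ with $\sum_j|v_j|\ge R_i$. Let $v$ be a positive solution and $\bar v$ a positive stationary solution of $$\frac{dv_i}{dt}=v_i\left[r_i-\frac{1}{K}\Psi_i(v)\right]+\sum_{j=1}^N\mu_{ij}(v_j-v_i),\qquad i=1,\dots,N.$$ Then (i) $\displaystyle\frac{d}{dt}\left(\sum_{i=1}^Nv_i\bar v_i\right)=\frac1K\sum_{i=1}^N(\Psi_i(\bar v)-\Psi_i(v))v_i\bar v_i$; (ii) $\displaystyle\frac{d}{dt}\left(\sum_{i=1}^Nv_i^2\right)=-\sum_{i,j=1}^N\mu_{ij}\bar v_i\bar v_j\left(\frac{v_i}{\bar v_i}-\frac{v_j}{\bar v_j}\right)^2+\frac2K\sum_{i=1}^Nv_i^2\left(\Psi_i(\bar v)-\Psi_i(v)\right)$.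
   Context: Positive means all components strictly positive; a stationary solution is a vector at which the right-hand side vanishes for every $i$. *)

theory Defs
  imports "HOL-Analysis.Analysis"
begin

definition locally_lipschitz :: "('a::metric_space \<Rightarrow> 'b::metric_space) \<Rightarrow> bool" where
  "locally_lipschitz f \<longleftrightarrow> (\<forall>x. \<exists>e>0. \<exists>L. L-lipschitz_on (ball x e) f)"

text \<open>Irreducible nonnegative matrix: the directed graph with an edge i to j
  whenever mu i j > 0 is strongly connected.\<close>
definition irreducible_matrix :: "('n::finite \<Rightarrow> 'n \<Rightarrow> real) \<Rightarrow> bool" where
  "irreducible_matrix mu \<longleftrightarrow> (\<forall>i j. (i, j) \<in> {(a, b). mu a b > 0}\<^sup>*)"

definition rhs :: "real \<Rightarrow> ('n::finite \<Rightarrow> real) \<Rightarrow> ('n \<Rightarrow> 'n \<Rightarrow> real)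
     \<Rightarrow> ('n \<Rightarrow> real^'n \<Rightarrow> real) \<Rightarrow> real^'n \<Rightarrow> real^'n" where
  "rhs K r mu Psi v = (\<chi> i. v$i * (r i - Psi i v / K) + (\<Sum>j\<in>UNIV. mu i j * (v$j - v$i)))"

end

theory Submission
  imports Defs
begin

theorem lemma3p2:
  fixes K :: real and r :: "'n::finite \<Rightarrow> real" and mu :: "'n \<Rightarrow> 'n \<Rightarrow> real"
    and Psi :: "'n \<Rightarrow> real^'n \<Rightarrow> real"
    and T :: "real set" and v :: "real \<Rightarrow> real^'n" and vbar :: "real^'n"
  assumes K_pos: "K > 0"
    and r_pos: "\<forall>i. r i > 0"
    and mu_nonneg: "\<forall>i j. mu i j \<ge> 0"
    and mu_sym: "\<forall>i j. mu i j = mu j i"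
    and mu_irred: "irreducible_matrix mu"
    and Psi_lip: "\<forall>i. locally_lipschitz (Psi i)"
    and Psi_zero: "\<forall>i. Psi i 0 = 0"
    and Psi_mono: "\<forall>i u w. (\<forall>j. u$j \<le> w$j) \<longrightarrow> Psi i u \<le> Psi i w"
    and Psi_growth: "\<forall>i. \<exists>R k c. R > 0 \<and> k > 0 \<and> c > 0 \<and>
        (\<forall>w. (\<forall>j. w$j \<ge> 0) \<and> (\<Sum>j\<in>UNIV. \<bar>w$j\<bar>) \<ge> R
             \<longrightarrow> c * (\<Sum>j\<in>UNIV. w$j) powr k \<le> Psi i w)"
    and T_int: "is_interval T"
    and v_sol: "\<forall>t\<in>T. (v has_vector_derivative rhs K r mu Psi (v t)) (at t within T)"
    and v_pos: "\<forall>t\<in>T. \<forall>i. v t $ i > 0"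
    and vbar_pos: "\<forall>i. vbar $ i > 0"
    and vbar_stat: "rhs K r mu Psi vbar = 0"
    and t_in: "t \<in> T"
  shows "((\<lambda>s. \<Sum>i\<in>UNIV. v s $ i * vbar $ i) has_real_derivative
            (1 / K) * (\<Sum>i\<in>UNIV. (Psi i vbar - Psi i (v t)) * v t $ i * vbar $ i)) (at t within T)
      \<and> ((\<lambda>s. \<Sum>i\<in>UNIV. (v s $ i)^2) has_real_derivative
            - (\<Sum>i\<in>UNIV. \<Sum>j\<in>UNIV. mu i j * vbar $ i * vbar $ j *
                  (v t $ i / vbar $ i - v t $ j / vbar $ j)^2)
            + (2 / K) * (\<Sum>i\<in>UNIV. (v t $ i)^2 * (Psi i vbar - Psi i (v t)))) (at t within T)"
proof -
  let ?a = "\<lambda>i. v t $ i" and ?b = "\<lambda>i. vbar $ i" and ?P = "\<lambda>i. Psi i (v t)" and ?Q = "\<lambda>i. Psi i vbar"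
  have comp: "((\<lambda>s. v s $ i) has_real_derivative
       (?a i * (r i - ?P i / K) + (\<Sum>j\<in>UNIV. mu i j * (?a j - ?a i)))) (at t within T)" for i
  proof -
    have "((\<lambda>s. v s $ i) has_vector_derivative rhs K r mu Psi (v t) $ i) (at t within T)"
      using bounded_linear.has_vector_derivative[OF bounded_linear_vec_nth v_sol[rule_format, OF t_in]] .
    then show ?thesis by (simp add: rhs_def has_real_derivative_iff_has_vector_derivative)
  qed
  have stat: "?b i * (r i - ?Q i / K) = - (\<Sum>j\<in>UNIV. mu i j * (?b j - ?b i))" for i
  proof -
    have "rhs K r mu Psi vbar $ i = 0" using vbar_stat by simp
    then show ?thesis by (simp add: rhs_def)
  qed
  have bne: "?b i \<noteq> 0" for i using vbar_pos by (metis less_irrefl)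
  have ri: "r i = ?Q i / K - (\<Sum>j\<in>UNIV. mu i j * (?b j - ?b i)) / ?b i" for i
    using stat[of i] bne[of i] by (simp add: field_simps)
  have swap0: "(\<Sum>i\<in>UNIV. \<Sum>j\<in>UNIV. mu i j * f i j) = (\<Sum>i\<in>UNIV. \<Sum>j\<in>UNIV. mu i j * f j i)" for f :: "'n \<Rightarrow> 'n \<Rightarrow> real"
    using sum.swap[of "\<lambda>i j. mu i j * f i j" UNIV UNIV] mu_sym by simp
  have D1: "((\<lambda>s. \<Sum>i\<in>UNIV. v s $ i * vbar $ i) has_real_derivative
      (\<Sum>i\<in>UNIV. (?a i * (r i - ?P i / K) + (\<Sum>j\<in>UNIV. mu i j * (?a j - ?a i))) * ?b i)) (at t within T)"
    by (intro DERIV_sum; rule DERIV_mult[OF comp DERIV_const, simplified])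
  have E1: "(\<Sum>i\<in>UNIV. (?a i * (r i - ?P i / K) + (\<Sum>j\<in>UNIV. mu i j * (?a j - ?a i))) * ?b i)
      = (1 / K) * (\<Sum>i\<in>UNIV. (?Q i - ?P i) * ?a i * ?b i)
        + (\<Sum>i\<in>UNIV. \<Sum>j\<in>UNIV. mu i j * (?b i * ?a j - ?a i * ?b j))"
  proof -
    have "(?a i * (r i - ?P i / K) + (\<Sum>j\<in>UNIV. mu i j * (?a j - ?a i))) * ?b i
        = (1 / K) * ((?Q i - ?P i) * ?a i * ?b i) + (\<Sum>j\<in>UNIV. mu i j * (?b i * ?a j - ?a i * ?b j))" for i
    proof -
      have "(?a i * (r i - ?P i / K) + (\<Sum>j\<in>UNIV. mu i j * (?a j - ?a i))) * ?b i
         = ?a i * (?b i * (r i - ?Q i / K)) + (1/K) * ((?Q i - ?P i) * ?a i * ?b i) + (\<Sum>j\<in>UNIV. mu i j * (?a j - ?a i)) * ?b i"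
        using K_pos by (simp add: field_simps)
      also have "\<dots> = (1/K) * ((?Q i - ?P i) * ?a i * ?b i) + ((\<Sum>j\<in>UNIV. mu i j * (?a j - ?a i)) * ?b i - ?a i * (\<Sum>j\<in>UNIV. mu i j * (?b j - ?b i)))"
        using stat[of i] by simp
      also have "(\<Sum>j\<in>UNIV. mu i j * (?a j - ?a i)) * ?b i - ?a i * (\<Sum>j\<in>UNIV. mu i j * (?b j - ?b i))
          = (\<Sum>j\<in>UNIV. mu i j * (?b i * ?a j - ?a i * ?b j))"
        by (simp add: sum_distrib_left sum_distrib_right sum_subtractf[symmetric] algebra_simps)
      finally show ?thesis .
    qed
    then show ?thesis by (simp add: sum.distrib sum_distrib_left)
  qed
  have Z1: "(\<Sum>i\<in>UNIV. \<Sum>j\<in>UNIV. mu i j * (?b i * ?a j - ?a i * ?b j)) = 0"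
  proof -
    have "(\<Sum>i\<in>UNIV. \<Sum>j\<in>UNIV. mu i j * (?b i * ?a j - ?a i * ?b j))
        = (\<Sum>i\<in>UNIV. \<Sum>j\<in>UNIV. mu i j * (?b i * ?a j)) - (\<Sum>i\<in>UNIV. \<Sum>j\<in>UNIV. mu i j * (?a i * ?b j))"
      by (simp add: right_diff_distrib sum_subtractf)
    also have "(\<Sum>i\<in>UNIV. \<Sum>j\<in>UNIV. mu i j * (?a i * ?b j)) = (\<Sum>i\<in>UNIV. \<Sum>j\<in>UNIV. mu i j * (?a j * ?b i))"
      by (rule swap0)
    finally show ?thesis by (simp add: mult.commute)
  qed
  have part1: "((\<lambda>s. \<Sum>i\<in>UNIV. v s $ i * vbar $ i) has_real_derivative
            (1 / K) * (\<Sum>i\<in>UNIV. (Psi i vbar - Psi i (v t)) * v t $ i * vbar $ i)) (at t within T)"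
    using D1 E1 Z1 by simp
  have D2: "((\<lambda>s. \<Sum>i\<in>UNIV. (v s $ i)^2) has_real_derivative
      (\<Sum>i\<in>UNIV. 2 * ?a i * (?a i * (r i - ?P i / K) + (\<Sum>j\<in>UNIV. mu i j * (?a j - ?a i))))) (at t within T)"
  proof (intro DERIV_sum)
    fix i
    show "((\<lambda>s. (v s $ i)^2) has_real_derivative 2 * ?a i * (?a i * (r i - ?P i / K) + (\<Sum>j\<in>UNIV. mu i j * (?a j - ?a i)))) (at t within T)"
      using DERIV_power[OF comp[of i], of 2] by (simp add: ac_simps)
  qed
  have E2: "(\<Sum>i\<in>UNIV. 2 * ?a i * (?a i * (r i - ?P i / K) + (\<Sum>j\<in>UNIV. mu i j * (?a j - ?a i))))
     = (2 / K) * (\<Sum>i\<in>UNIV. (?a i)^2 * (?Q i - ?P i))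
       + 2 * (\<Sum>i\<in>UNIV. \<Sum>j\<in>UNIV. mu i j * (?a i * ?a j - (?a i)^2 * ?b j / ?b i))"
  proof -
    have "2 * ?a i * (?a i * (r i - ?P i / K) + (\<Sum>j\<in>UNIV. mu i j * (?a j - ?a i)))
       = (2 / K) * ((?a i)^2 * (?Q i - ?P i)) + 2 * (\<Sum>j\<in>UNIV. mu i j * (?a i * ?a j - (?a i)^2 * ?b j / ?b i))" for i
    proof -
      have "2 * ?a i * (?a i * (r i - ?P i / K) + (\<Sum>j\<in>UNIV. mu i j * (?a j - ?a i)))
          = (2 / K) * ((?a i)^2 * (?Q i - ?P i)) + 2 * ((?a i)^2 * (- (\<Sum>j\<in>UNIV. mu i j * (?b j - ?b i)) / ?b i) + ?a i * (\<Sum>j\<in>UNIV. mu i j * (?a j - ?a i)))"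
        unfolding ri[of i] using K_pos bne[of i] by (simp add: field_simps power2_eq_square)
      also have "(?a i)^2 * (- (\<Sum>j\<in>UNIV. mu i j * (?b j - ?b i)) / ?b i) + ?a i * (\<Sum>j\<in>UNIV. mu i j * (?a j - ?a i))
          = (\<Sum>j\<in>UNIV. mu i j * (?a i * ?a j - (?a i)^2 * ?b j / ?b i))"
        using bne[of i]
        by (simp add: sum_distrib_left sum_divide_distrib sum_negf[symmetric] sum.distrib[symmetric] field_simps power2_eq_square)
      finally show ?thesis .
    qed
    then show ?thesis by (simp add: sum.distrib sum_distrib_left)
  qed
  have Z2: "- (\<Sum>i\<in>UNIV. \<Sum>j\<in>UNIV. mu i j * ?b i * ?b j * (?a i / ?b i - ?a j / ?b j)^2)
       = 2 * (\<Sum>i\<in>UNIV. \<Sum>j\<in>UNIV. mu i j * (?a i * ?a j - (?a i)^2 * ?b j / ?b i))"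
  proof -
    have e: "mu i j * ?b i * ?b j * (?a i / ?b i - ?a j / ?b j)^2
        = mu i j * ((?a i)^2 * ?b j / ?b i) + mu i j * ((?a j)^2 * ?b i / ?b j) - 2 * (mu i j * (?a i * ?a j))" for i j
      using bne[of i] bne[of j] by (simp add: field_simps power2_eq_square)
    have s: "(\<Sum>i\<in>UNIV. \<Sum>j\<in>UNIV. mu i j * ((?a j)^2 * ?b i / ?b j)) = (\<Sum>i\<in>UNIV. \<Sum>j\<in>UNIV. mu i j * ((?a i)^2 * ?b j / ?b i))"
      by (rule swap0[symmetric])
    have "(\<Sum>i\<in>UNIV. \<Sum>j\<in>UNIV. mu i j * ?b i * ?b j * (?a i / ?b i - ?a j / ?b j)^2)
       = (\<Sum>i\<in>UNIV. \<Sum>j\<in>UNIV. mu i j * ((?a i)^2 * ?b j / ?b i))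
         + (\<Sum>i\<in>UNIV. \<Sum>j\<in>UNIV. mu i j * ((?a j)^2 * ?b i / ?b j))
         - 2 * (\<Sum>i\<in>UNIV. \<Sum>j\<in>UNIV. mu i j * (?a i * ?a j))"
      unfolding e by (simp only: sum.distrib sum_subtractf sum_distrib_left)
    also have "\<dots> = 2 * (\<Sum>i\<in>UNIV. \<Sum>j\<in>UNIV. mu i j * ((?a i)^2 * ?b j / ?b i))
         - 2 * (\<Sum>i\<in>UNIV. \<Sum>j\<in>UNIV. mu i j * (?a i * ?a j))"
      unfolding s by simp
    also have "\<dots> = - (2 * (\<Sum>i\<in>UNIV. \<Sum>j\<in>UNIV. mu i j * (?a i * ?a j - (?a i)^2 * ?b j / ?b i)))"
      by (simp only: right_diff_distrib sum_subtractf)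
    finally show ?thesis by simp
  qed
  have part2: "((\<lambda>s. \<Sum>i\<in>UNIV. (v s $ i)^2) has_real_derivative
            - (\<Sum>i\<in>UNIV. \<Sum>j\<in>UNIV. mu i j * vbar $ i * vbar $ j *
                  (v t $ i / vbar $ i - v t $ j / vbar $ j)^2)
            + (2 / K) * (\<Sum>i\<in>UNIV. (v t $ i)^2 * (Psi i vbar - Psi i (v t)))) (at t within T)"
    using D2 unfolding E2 Z2 by (simp add: add.commute)
  show ?thesis using part1 part2 by simp
qed

end
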